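(* For every positive integer $n$ and every $\nu\in\mathbb{N}$, the integral $$I_n(\nu):=(\nu+1)^n\int_{\mathbb{C}^n}\left|\frac{(1+s_1\overline{s_2})\cdots(1+s_{n-1}\overline{s_n})}{(1+|s_1|^2)\cdots(1+|s_n|^2)}\right|^\nu d\iota(s_1)\cdots d\iota(s_n)$$ satisfies $I_n(\nu)\le 2^{2n}$; in particular it is bounded in $\nu$.
   Context: $d\iota(s)=\frac{dA(s)}{\pi(1+|s|^2)^2}$, where $dA$ is Lebesgue measure on $\mathbb{C}$. *)

theory Defs
  imports "HOL-Probability.Probability"
begin

definition iota :: "complex measure" where
  "iota = density lborel (\<lambda>s. ennreal (1 / (pi * (1 + (cmod s)\<^sup>2)\<^sup>2)))"

text \<open>The integrand, with coordinates s 0, ..., s (n-1).\<close>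
definition integrand :: "nat \<Rightarrow> nat \<Rightarrow> (nat \<Rightarrow> complex) \<Rightarrow> real" where
  "integrand n \<nu> s =
     (cmod ((\<Prod>i<n - 1. (1 + s i * cnj (s (Suc i)))) / (\<Prod>i<n. of_real (1 + (cmod (s i))\<^sup>2)))) ^ \<nu>"

definition I :: "nat \<Rightarrow> nat \<Rightarrow> ennreal" where
  "I n \<nu> = ennreal (real (\<nu> + 1) ^ n) *
     (\<integral>\<^sup>+ s. ennreal (integrand n \<nu> s) \<partial>(PiM {..<n} (\<lambda>_. iota)))"

end

theory Submission
  imports Defs
begin



definition E2 :: "real^2 \<Rightarrow> complex" where "E2 x = Complex (x$1) (x$2)"
definition F2 :: "complex \<Rightarrow> real^2" where "F2 z = (\<chi> i. if i = 1 then Re z else Im z)"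

lemma F2_nth[simp]: "F2 z $ 1 = Re z" "F2 z $ 2 = Im z"
  by (simp_all add: F2_def)

lemma E2_F2[simp]: "E2 (F2 z) = z" by (simp add: E2_def complex_eq_iff)
lemma F2_E2[simp]: "F2 (E2 x) = x"
proof -
  have "F2 (E2 x) $ i = x $ i" for i
    using exhaust_2[of i] by (auto simp: E2_def)
  then show ?thesis by (simp add: vec_eq_iff)
qed

lemma linear_E2: "linear E2"
  by (rule linearI) (simp_all add: E2_def complex_eq_iff)
lemma linear_F2: "linear F2"
proof (rule linearI)
  show "F2 (b1 + b2) = F2 b1 + F2 b2" for b1 b2
    unfolding vec_eq_iff F2_def by simp
  show "F2 (r *\<^sub>R b) = r *\<^sub>R F2 b" for r b
    unfolding vec_eq_iff F2_def by simp
qed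

lemma cont_E2: "continuous_on UNIV E2"
  using linear_E2 by (simp add: linear_continuous_on linear_linear)
lemma cont_F2: "continuous_on UNIV F2"
  using linear_F2 by (simp add: linear_continuous_on linear_linear)

lemma cnj_meas[measurable]: "cnj \<in> borel_measurable borel"
  by (intro borel_measurable_continuous_onI continuous_intros)

lemma E2_meas[measurable]: "E2 \<in> borel_measurable borel"
  using cont_E2 by (rule borel_measurable_continuous_onI)

lemma box_cplx: "E2 -` box l u = box (F2 l) (F2 u)"
proof -
  have "x \<in> box (F2 l) (F2 u) \<longleftrightarrow> (Re l < x$1 \<and> x$1 < Re u \<and> Im l < x$2 \<and> x$2 < Im u)" for x
    unfolding mem_box_cart forall_2 by simp
  moreover have "z \<in> box l u \<longleftrightarrow> (Re l < Re z \<and> Re z < Re u \<and> Im l < Im z \<and> Im z < Im u)" for z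
    by (auto simp: mem_box Basis_complex_def)
  ultimately show ?thesis by (auto simp: E2_def)
qed

lemma lborel_complex_E2: "(lborel :: complex measure) = distr lborel borel E2"
proof (rule lborel_eqI)
  fix l u :: complex
  assume le: "\<And>b. b \<in> Basis \<Longrightarrow> l \<bullet> b \<le> u \<bullet> b"
  have le2: "Re l \<le> Re u" "Im l \<le> Im u" using le[of 1] le[of \<i>]
    by (auto simp: Basis_complex_def)
  have "emeasure lborel (box (F2 l) (F2 u)) = ennreal ((Re u - Re l) * (Im u - Im l))"
  proof -
    have "emeasure lborel (box (F2 l) (F2 u)) = (\<Prod>b\<in>Basis. (F2 u - F2 l) \<bullet> b)"
      apply (rule emeasure_lborel_box)
      using le2 by (auto simp: Basis_vec_def cart_eq_inner_axis[symmetric] F2_def)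
    also have "\<dots> = (\<Prod>i\<in>UNIV. (F2 u - F2 l) $ i)"
      by (simp add: Basis_vec_def cart_eq_inner_axis axis_eq_axis prod.UNION_disjoint)
    also have "\<dots> = (Re u - Re l) * (Im u - Im l)"
      by (simp add: UNIV_2)
    finally show ?thesis .
  qed
  moreover have "(\<Prod>b\<in>Basis. (u - l) \<bullet> b) = (Re u - Re l) * (Im u - Im l)"
    by (simp add: Basis_complex_def)
  ultimately show "emeasure (distr lborel borel E2) (box l u) = (\<Prod>b\<in>Basis. (u - l) \<bullet> b)"
    by (simp add: emeasure_distr box_cplx)
qed simp


lemma layer_cake_lborel:
  fixes f :: "'a::euclidean_space \<Rightarrow> real"
  assumes [measurable]: "f \<in> borel_measurable borel" and nn: "\<And>x. f x \<ge> 0"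
  shows "(\<integral>\<^sup>+x. ennreal (f x) \<partial>lborel) =
         (\<integral>\<^sup>+y. indicator {0<..} y * emeasure lborel {x. y < f x} \<partial>(lborel::real measure))"
proof -
  have "(\<integral>\<^sup>+x. ennreal (f x) \<partial>lborel) =
        (\<integral>\<^sup>+x. (\<integral>\<^sup>+y. indicator {p::'a\<times>real. 0 < snd p \<and> snd p < f (fst p)} (x, y) \<partial>lborel) \<partial>lborel)"
  proof (rule nn_integral_cong)
    fix x
    have "(\<integral>\<^sup>+y. indicator {p::'a\<times>real. 0 < snd p \<and> snd p < f (fst p)} (x, y) \<partial>lborel)
          = (\<integral>\<^sup>+y. indicator {0<..<f x} y \<partial>lborel)"
      by (intro nn_integral_cong) (auto simp: indicator_def)
    also have "\<dots> = ennreal (f x)" using nn[of x] by simp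
    finally show "ennreal (f x) = (\<integral>\<^sup>+y. indicator {p::'a\<times>real. 0 < snd p \<and> snd p < f (fst p)} (x, y) \<partial>lborel)" by (rule sym)
  qed
  also have "\<dots> = (\<integral>\<^sup>+y. (\<integral>\<^sup>+x. indicator {p::'a\<times>real. 0 < snd p \<and> snd p < f (fst p)} (x, y) \<partial>lborel) \<partial>lborel)"
    by (rule lborel_pair.Fubini'[symmetric]) measurable
  also have "\<dots> = (\<integral>\<^sup>+y. indicator {0<..} y * emeasure lborel {x. y < f x} \<partial>(lborel::real measure))"
  proof (rule nn_integral_cong)
    fix y :: real
    have "(\<integral>\<^sup>+x. indicator {p::'a\<times>real. 0 < snd p \<and> snd p < f (fst p)} (x, y) \<partial>lborel)
        = (\<integral>\<^sup>+x. indicator {0<..} y * indicator {x. y < f x} x \<partial>lborel)"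
      by (intro nn_integral_cong) (auto simp: indicator_def)
    also have "\<dots> = indicator {0<..} y * emeasure lborel {x. y < f x}"
      by (subst nn_integral_cmult) auto
    finally show "(\<integral>\<^sup>+x. indicator {p::'a\<times>real. 0 < snd p \<and> snd p < f (fst p)} (x, y) \<partial>lborel) = indicator {0<..} y * emeasure lborel {x. y < f x}" .
  qed
  finally show ?thesis .
qed


lemma powr_neg_less_iff:
  fixes y A q :: real
  assumes "0 < y" "0 < A" "0 < q"
  shows "y < A powr (-q) \<longleftrightarrow> A < y powr (-1/q)"
proof -
  have "y < A powr (-q) \<longleftrightarrow> ln y < -q * ln A"
    using assms by (simp add: ln_powr[symmetric] del: ln_powr)
  also have "\<dots> \<longleftrightarrow> ln A < (-1/q) * ln y"
    using assms by (auto simp: field_simps)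
  also have "\<dots> \<longleftrightarrow> A < y powr (-1/q)"
    using assms by (simp add: ln_powr[symmetric] del: ln_powr)
  finally show ?thesis .
qed

lemma powr_int_01:
  fixes q :: real assumes q: "q > 1"
  shows "((\<lambda>y. pi * (y powr (-1/q) - 1)) has_integral (pi / (q - 1))) {0<..1}"
proof -
  have a: "-1/q > -1" using q by (simp add: field_simps)
  have "((\<lambda>y. y powr (-1/q)) has_integral (1 powr (-1/q+1) / (-1/q+1))) {0..1}"
    by (rule has_integral_powr_from_0[OF a]) simp
  moreover have "((\<lambda>y. 1::real) has_integral 1) {0..1::real}"
    using has_integral_const_real[of "1::real" 0 1] by simp
  ultimately have "((\<lambda>y. pi * (y powr (-1/q) - 1)) has_integral (pi * (1 powr (-1/q+1) / (-1/q+1) - 1))) {0..1}"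
    by (intro has_integral_mult_right has_integral_diff)
  moreover have "pi * (1 powr (-1/q+1) / (-1/q+1) - 1) = pi / (q - 1)"
    using q by (simp add: field_simps)
  ultimately have "((\<lambda>y. pi * (y powr (-1/q) - 1)) has_integral (pi / (q - 1))) {0..1}" by simp
  moreover have "negligible {x \<in> {0..1::real} - {0<..1}. pi * (x powr (-1/q) - 1) \<noteq> 0}"
    by (rule negligible_subset[of "{0}"]) auto
  moreover have "negligible {x \<in> {0<..1::real} - {0..1}. pi * (x powr (-1/q) - 1) \<noteq> 0}"
    by (rule negligible_subset[of "{}"]) auto
  ultimately show ?thesis using has_integral_spike_set_eq[of "{0..1::real}" "{0<..1}" "\<lambda>y. pi * (y powr (-1/q) - 1)"] by blast
qed

lemma radial_integral:
  fixes q :: real assumes q: "q > 1"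
  shows "(\<integral>\<^sup>+x. ennreal ((1 + (norm x)\<^sup>2) powr (-q)) \<partial>(lborel::(real^2) measure)) = ennreal (pi / (q - 1))"
proof -
  have "(\<integral>\<^sup>+x. ennreal ((1 + (norm x)\<^sup>2) powr (-q)) \<partial>(lborel::(real^2) measure))
     = (\<integral>\<^sup>+y. indicator {0<..} y * emeasure lborel {x::real^2. y < (1 + (norm x)\<^sup>2) powr (-q)} \<partial>lborel)"
    by (rule layer_cake_lborel) auto
  also have "\<dots> = (\<integral>\<^sup>+y. ennreal (indicator {0<..1} y * (pi * (y powr (-1/q) - 1))) \<partial>lborel)"
  proof (rule nn_integral_cong)
    fix y :: real
    show "indicator {0<..} y * emeasure lborel {x::real^2. y < (1 + (norm x)\<^sup>2) powr (-q)}
        = ennreal (indicator {0<..1} y * (pi * (y powr (-1/q) - 1)))"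
    proof (cases "y \<le> 0")
      case True then show ?thesis by (simp add: indicator_def)
    next
      case False
      then have y: "y > 0" by simp
      show ?thesis
      proof (cases "y \<le> 1")
        case True
        define R where "R = sqrt (y powr (-1/q) - 1)"
        have p: "0 < y powr (1/q)" "y powr (1/q) \<le> 1"
          using powr_mono2[of "1/q" y 1] y True q by auto
        have e: "y powr (-1/q) = inverse (y powr (1/q))"
          using powr_minus[of y "1/q"] by simp
        have ge1: "y powr (-1/q) \<ge> 1"
          unfolding e using p by (simp add: one_le_inverse)
        have set: "{x::real^2. y < (1 + (norm x)\<^sup>2) powr (-q)} = ball 0 R"
        proof -
          have "y < (1 + (norm x)\<^sup>2) powr (-q) \<longleftrightarrow> norm x < R" for x :: "real^2"
          proof -
            have "y < (1 + (norm x)\<^sup>2) powr (-q) \<longleftrightarrow> 1 + (norm x)\<^sup>2 < y powr (-1/q)"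
              using y q by (intro powr_neg_less_iff) (auto simp: add_pos_nonneg)
            also have "\<dots> \<longleftrightarrow> (norm x)\<^sup>2 < y powr (-1/q) - 1"
              by auto
            also have "\<dots> \<longleftrightarrow> sqrt ((norm x)\<^sup>2) < R"
              unfolding R_def by (rule real_sqrt_less_iff[symmetric])
            also have "\<dots> \<longleftrightarrow> norm x < R"
              by simp
            finally show ?thesis .
          qed
          then show ?thesis by (simp add: set_eq_iff mem_ball dist_0_norm)
        qed
        have R0: "R \<ge> 0" using ge1 by (simp add: R_def)
        have "emeasure lborel (ball (0::real^2) R) = ennreal (unit_ball_vol (real DIM(real^2)) * R ^ DIM(real^2))"
          by (rule emeasure_ball[OF R0])
        moreover have "DIM(real^2) = 2" by simp
        ultimately have "emeasure lborel (ball (0::real^2) R) = ennreal (pi * R\<^sup>2)"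
          by (simp add: unit_ball_vol_2)
        moreover have "R\<^sup>2 = y powr (-1/q) - 1" using ge1 by (simp add: R_def)
        ultimately show ?thesis using y True by (simp add: set indicator_def)
      next
        case False
        have "{x::real^2. y < (1 + (norm x)\<^sup>2) powr (-q)} = {}"
        proof -
          have hh: "(1 + (norm x)\<^sup>2) powr (-q) \<le> 1" for x :: "real^2"
          proof -
            have "1 \<le> (1 + (norm x)\<^sup>2) powr q" using q by (intro ge_one_powr_ge_zero) auto
            then show ?thesis by (simp add: powr_minus inverse_le_1_iff)
          qed
          have "\<not> y < (1 + (norm x)\<^sup>2) powr (-q)" for x :: "real^2"
            using False hh[of x] by linarith
          then show ?thesis by blast
        qed
        then show ?thesis using False by (simp add: indicator_def)
      qed
    qed
  qed
  also have "\<dots> = ennreal (pi / (q - 1))"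
  proof (rule nn_integral_has_integral_lebesgue)
    show "((\<lambda>y. pi * (y powr (-1/q) - 1)) has_integral (pi / (q - 1))) {0<..1}"
      using q by (rule powr_int_01)
    fix y :: real assume "y \<in> {0<..1}"
    then have p: "0 < y powr (1/q)" "y powr (1/q) \<le> 1"
      using powr_mono2[of "1/q" y 1] q by auto
    have e: "y powr (-1/q) = inverse (y powr (1/q))"
      using powr_minus[of y "1/q"] by simp
    show "0 \<le> pi * (y powr (-1/q) - 1)"
      unfolding e using p by (simp add: one_le_inverse)
  qed
  finally show ?thesis .
qed



definition mob :: "complex \<Rightarrow> complex \<Rightarrow> complex" where
  "mob t w = (w + t) / (1 - cnj t * w)"
definition mobd :: "complex \<Rightarrow> complex \<Rightarrow> complex" where
  "mobd t w = (1 + cnj t * t) / (1 - cnj t * w)\<^sup>2"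

lemma cmod_sq_eq: "(cmod z)\<^sup>2 = (Re z)\<^sup>2 + (Im z)\<^sup>2"
  by (simp add: cmod_power2)

lemma cnj_mult_self: "cnj t * t = of_real ((cmod t)\<^sup>2)"
  by (metis complex_mult_cnj mult.commute cmod_power2)

lemma Tnz: "1 + cnj t * t \<noteq> 0"
proof -
  have "1 + cnj t * t = of_real (1 + (cmod t)\<^sup>2)" by (simp add: cnj_mult_self)
  moreover have "1 + (cmod t)\<^sup>2 \<noteq> 0" by (smt (verit) zero_le_power2)
  ultimately show ?thesis by (simp only: of_real_eq_0_iff) simp
qed

lemma mob_id1:
  assumes d: "1 - cnj t * w \<noteq> 0"
  shows "cmod (1 + t * cnj (mob t w)) * cmod (1 - cnj t * w) = 1 + (cmod t)\<^sup>2"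
proof -
  define M where "M = cnj (mob t w)"
  define cD where "cD = cnj (1 - cnj t * w)"
  have cD: "cD = 1 - t * cnj w" by (simp add: cD_def)
  have MD: "M * cD = cnj w + cnj t"
  proof -
    have "mob t w * (1 - cnj t * w) = w + t" using d by (simp add: mob_def)
    then have "cnj (mob t w * (1 - cnj t * w)) = cnj (w + t)" by simp
    then show ?thesis by (simp add: M_def cD_def)
  qed
  have "(1 + t * M) * cD = cD + t * (M * cD)" by (simp add: algebra_simps)
  also have "\<dots> = 1 + cnj t * t" by (simp only: MD) (simp add: cD algebra_simps)
  also have "\<dots> = of_real (1 + (cmod t)\<^sup>2)" by (simp add: cnj_mult_self)
  finally have "cmod ((1 + t * M) * cD) = cmod (of_real (1 + (cmod t)\<^sup>2) :: complex)" by simp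
  also have "\<dots> = 1 + (cmod t)\<^sup>2" by (simp only: norm_of_real) (smt (verit) zero_le_power2)
  finally show ?thesis by (simp only: norm_mult M_def cD_def complex_mod_cnj)
qed

lemma mob_id2:
  assumes d: "1 - cnj t * w \<noteq> 0"
  shows "(1 + (cmod (mob t w))\<^sup>2) * (cmod (1 - cnj t * w))\<^sup>2 = (1 + (cmod t)\<^sup>2) * (1 + (cmod w)\<^sup>2)"
proof -
  have "(cmod (mob t w))\<^sup>2 * (cmod (1 - cnj t * w))\<^sup>2 = (cmod (w + t))\<^sup>2"
    using d by (simp add: mob_def norm_divide power_divide)
  moreover have "(cmod (1 - cnj t * w))\<^sup>2 + (cmod (w + t))\<^sup>2 = (1 + (cmod t)\<^sup>2) * (1 + (cmod w)\<^sup>2)"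
    by (simp add: cmod_sq_eq) (simp add: power2_eq_square algebra_simps)
  ultimately show ?thesis by (simp add: algebra_simps)
qed

lemma mob_deriv:
  assumes d: "1 - cnj t * w \<noteq> 0"
  shows "(mob t has_field_derivative mobd t w) (at w)"
  unfolding mob_def[abs_def] mobd_def
  using d by (auto intro!: derivative_eq_intros simp: power2_eq_square field_simps)

lemma mob_inj: "inj_on (mob t) {w. 1 - cnj t * w \<noteq> 0}"
proof (rule inj_onI)
  fix w1 w2 assume w1: "w1 \<in> {w. 1 - cnj t * w \<noteq> 0}" and w2: "w2 \<in> {w. 1 - cnj t * w \<noteq> 0}"
    and eq: "mob t w1 = mob t w2"
  then have "(w1 + t) * (1 - cnj t * w2) = (w2 + t) * (1 - cnj t * w1)"
    by (simp add: mob_def divide_eq_eq field_simps)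
  then have "(w1 - w2) * (1 + cnj t * t) = 0"
    by (simp add: algebra_simps)
  then show "w1 = w2" using Tnz[of t] by simp
qed

lemma mob_surj:
  assumes z: "1 + cnj t * z \<noteq> 0"
  shows "z \<in> mob t ` {w. 1 - cnj t * w \<noteq> 0}"
proof -
  define w where "w = (z - t) / (1 + cnj t * z)"
  have Tn: "1 + cnj t * t \<noteq> 0" by (rule Tnz)
  have dw: "1 - cnj t * w = (1 + cnj t * t) / (1 + cnj t * z)"
    using z by (simp add: w_def field_simps)
  then have "1 - cnj t * w \<noteq> 0" using Tn z by simp
  moreover have "mob t w = z"
  proof -
    have wt: "w + t = z * (1 + cnj t * t) / (1 + cnj t * z)"
      using z by (simp add: w_def field_simps)
    show ?thesis unfolding mob_def wt dw using z Tn by simp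
  qed
  ultimately show ?thesis by force
qed


definition rho :: "complex \<Rightarrow> real" where
  "rho s = 1 / (pi * (1 + (cmod s)\<^sup>2)\<^sup>2)"
definition kk :: "nat \<Rightarrow> complex \<Rightarrow> complex \<Rightarrow> real" where
  "kk \<nu> t s = (cmod (1 + t * cnj s) / sqrt ((1 + (cmod t)\<^sup>2) * (1 + (cmod s)\<^sup>2))) ^ \<nu>"

lemma mob_pullback:
  assumes d: "1 - cnj t * w \<noteq> 0"
  shows "(cmod (mobd t w))\<^sup>2 * (rho (mob t w) * kk \<nu> t (mob t w)) = rho w * kk \<nu> 0 w"
proof -
  define D where "D = cmod (1 - cnj t * w)"
  define Tt where "Tt = 1 + (cmod t)\<^sup>2"
  define W where "W = 1 + (cmod w)\<^sup>2"
  define A where "A = 1 + (cmod (mob t w))\<^sup>2"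
  define N where "N = cmod (1 + t * cnj (mob t w))"
  have D0: "D > 0" using d by (simp add: D_def)
  have T0: "Tt > 0" "W > 0" "A > 0" by (simp_all add: Tt_def W_def A_def add_pos_nonneg)
  have ND: "N * D = Tt" using mob_id1[OF d] by (simp add: N_def D_def Tt_def)
  have AD: "A * D\<^sup>2 = Tt * W" using mob_id2[OF d] by (simp add: A_def D_def Tt_def W_def)
  have md: "cmod (mobd t w) = Tt / D\<^sup>2"
  proof -
    have "1 + cnj t * t = of_real Tt" by (simp add: cnj_mult_self Tt_def)
    then have "cmod (1 + cnj t * t) = \<bar>Tt\<bar>" by (simp only: norm_of_real)
    then have "cmod (1 + cnj t * t) = Tt" using T0 by simp
    then show ?thesis by (simp add: mobd_def norm_divide norm_power D_def)
  qed
  have sq: "sqrt (Tt * A) = Tt * sqrt W / D"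
  proof (rule real_sqrt_unique)
    have "(Tt * sqrt W / D)\<^sup>2 = Tt\<^sup>2 * W / D\<^sup>2"
      using T0 by (simp add: power_divide power_mult_distrib)
    also have "\<dots> = Tt * A" using AD D0 by (simp add: field_simps power2_eq_square)
    finally show "(Tt * sqrt W / D)\<^sup>2 = Tt * A" .
    show "0 \<le> Tt * sqrt W / D" using T0 D0 by simp
  qed
  have e1: "N / sqrt (Tt * A) = 1 / sqrt W"
    unfolding sq using ND D0 T0 by (simp add: field_simps)
  have e2: "(cmod (mobd t w))\<^sup>2 * (1 / (pi * A\<^sup>2)) = 1 / (pi * W\<^sup>2)"
  proof -
    have "(Tt / D\<^sup>2)\<^sup>2 * (1/(pi * A\<^sup>2)) = Tt\<^sup>2 / (pi * (A * D\<^sup>2)\<^sup>2)"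
      using T0 D0 by (simp add: power_divide power_mult_distrib field_simps)
    also have "\<dots> = Tt\<^sup>2 / (pi * (Tt * W)\<^sup>2)" by (simp only: AD)
    also have "\<dots> = 1 / (pi * W\<^sup>2)" using T0 by (simp add: power_mult_distrib field_simps)
    finally show ?thesis unfolding md .
  qed
  have "(cmod (mobd t w))\<^sup>2 * (rho (mob t w) * kk \<nu> t (mob t w))
      = ((cmod (mobd t w))\<^sup>2 * (1 / (pi * A\<^sup>2))) * (N / sqrt (Tt * A)) ^ \<nu>"
    by (simp add: rho_def kk_def A_def N_def Tt_def)
  also have "\<dots> = 1 / (pi * W\<^sup>2) * (1 / sqrt W) ^ \<nu>" by (simp only: e1 e2)
  also have "\<dots> = rho w * kk \<nu> 0 w" by (simp add: rho_def kk_def W_def)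
  finally show ?thesis .
qed




lemma rho_meas[measurable]: "rho \<in> borel_measurable borel"
  unfolding rho_def by measurable
lemma kk_meas[measurable]: "(\<lambda>s. kk \<nu> t s) \<in> borel_measurable borel"
  unfolding kk_def by measurable

lemma normE2: "cmod (E2 x) = norm x"
  by (simp add: E2_def norm_vec_def L2_set_def UNIV_2 cmod_def)

lemma H_eq: "rho w * kk \<nu> 0 w = (1 + (cmod w)\<^sup>2) powr (-(real \<nu>/2 + 2)) / pi"
proof -
  define X where "X = 1 + (cmod w)\<^sup>2"
  have X: "X > 0" by (simp add: X_def add_pos_nonneg)
  have "kk \<nu> 0 w = (1 / sqrt X) ^ \<nu>" by (simp add: kk_def X_def)
  also have "\<dots> = X powr (-(real \<nu>/2))"
  proof -
    have "1 / sqrt X = X powr (-(1/2))"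
      using X by (simp only: powr_minus_divide powr_half_sqrt less_imp_le)
    then have "(1 / sqrt X) ^ \<nu> = X powr (of_nat \<nu> * (-(1/2)))"
      using X by (simp only: powr_power[of X] less_imp_neq not_sym)
    then show ?thesis by simp
  qed
  finally have k: "kk \<nu> 0 w = X powr (-(real \<nu>/2))" .
  have r: "rho w = X powr (-2) / pi"
  proof -
    have "X powr (-2) = 1 / X powr 2" by (rule powr_minus_divide)
    also have "X powr 2 = X\<^sup>2" using X powr_realpow[of X 2] by simp
    finally show ?thesis by (simp add: rho_def X_def)
  qed
  have "X powr (-(real \<nu>/2)) * X powr (-2) = X powr (-(real \<nu>/2 + 2))"
    by (simp add: powr_add[symmetric])
  then show ?thesis unfolding X_def[symmetric] k r by (simp add: mult.commute)
qed


lemma H_nn_integral: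
  "(\<integral>\<^sup>+x. ennreal (rho (E2 x) * kk \<nu> 0 (E2 x)) \<partial>(lborel::(real^2) measure)) = ennreal (2 / (real \<nu> + 2))"
proof -
  define q where "q = real \<nu> / 2 + 2"
  have q: "q > 1" by (simp add: q_def)
  have "(\<integral>\<^sup>+x. ennreal (rho (E2 x) * kk \<nu> 0 (E2 x)) \<partial>(lborel::(real^2) measure))
      = (\<integral>\<^sup>+x. ennreal ((1 + (norm x)\<^sup>2) powr (-q)) * ennreal (1/pi) \<partial>(lborel::(real^2) measure))"
  proof (intro nn_integral_cong)
    fix x :: "real^2"
    have e: "rho (E2 x) * kk \<nu> 0 (E2 x) = (1 + (norm x)\<^sup>2) powr (-q) * (1/pi)"
      by (simp add: H_eq normE2 q_def)
    show "ennreal (rho (E2 x) * kk \<nu> 0 (E2 x)) = ennreal ((1 + (norm x)\<^sup>2) powr (-q)) * ennreal (1/pi)"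
      unfolding e by (rule ennreal_mult) auto
  qed
  also have "\<dots> = ennreal (pi / (q - 1)) * ennreal (1/pi)"
    by (simp add: nn_integral_multc radial_integral[OF q])
  also have "\<dots> = ennreal (2 / (real \<nu> + 2))"
    using q by (simp add: ennreal_mult[symmetric] q_def field_simps)
  finally show ?thesis .
qed

lemma H_has_integral:
  "((\<lambda>x. rho (E2 x) * kk \<nu> 0 (E2 x)) has_integral (2 / (real \<nu> + 2))) UNIV"
proof (rule nn_integral_has_integral)
  show "(\<lambda>x. rho (E2 x) * kk \<nu> 0 (E2 x)) \<in> borel_measurable borel" by measurable
  show "0 \<le> rho (E2 x) * kk \<nu> 0 (E2 x)" for x
    by (simp add: rho_def kk_def)
  show "(\<integral>\<^sup>+x. ennreal (rho (E2 x) * kk \<nu> 0 (E2 x)) \<partial>lborel) = ennreal (2 / (real \<nu> + 2))"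
    by (rule H_nn_integral)
  show "0 \<le> 2 / (real \<nu> + 2)" by simp
qed



lemma lebesgue_of_borel: "A \<in> sets borel \<Longrightarrow> A \<in> sets lebesgue"
  by (metis sets_completionI_sets sets_lborel)

lemma det_mult_complex:
  "\<bar>det (matrix (\<lambda>h. F2 (c * E2 h)))\<bar> = (cmod c)\<^sup>2"
proof -
  have a1: "E2 (axis 1 1) = 1" by (simp add: E2_def axis_def complex_eq_iff)
  have a2: "E2 (axis 2 1) = \<i>" by (simp add: E2_def axis_def complex_eq_iff)
  have "det (matrix (\<lambda>h. F2 (c * E2 h))) = Re c * Re c - (- Im c) * Im c"
    by (simp add: det_2 matrix_def a1 a2)
  also have "\<dots> = (cmod c)\<^sup>2" unfolding cmod_sq_eq by (simp add: power2_eq_square)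
  finally show ?thesis by simp
qed

lemma key_lborel:
  "(\<integral>\<^sup>+s. ennreal (rho s * kk \<nu> t s) \<partial>lborel) = ennreal (2 / (real \<nu> + 2))"
proof -
  define S where "S = {x::real^2. 1 - cnj t * E2 x \<noteq> 0}"
  define g where "g = (\<lambda>x. F2 (mob t (E2 x)))"
  define g' where "g' = (\<lambda>x h. F2 (mobd t (E2 x) * E2 h))"
  define G where "G = (\<lambda>y::real^2. rho (E2 y) * kk \<nu> t (E2 y))"
  define H where "H = (\<lambda>y::real^2. rho (E2 y) * kk \<nu> 0 (E2 y))"
  define f where "f = (\<lambda>y::real^2. vec (G y) :: real^1)"
  define b where "b = 2 / (real \<nu> + 2)"
  have Gnn: "G y \<ge> 0" for y by (simp add: G_def rho_def kk_def)
  have Hnn: "H y \<ge> 0" for y by (simp add: H_def rho_def kk_def)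
  have S_leb: "S \<in> sets lebesgue"
    by (rule lebesgue_of_borel) (simp add: S_def)
  have blE: "bounded_linear E2" using linear_E2 by (simp add: linear_conv_bounded_linear)
  have blF: "bounded_linear F2" using linear_F2 by (simp add: linear_conv_bounded_linear)
  have der: "(g has_derivative g' x) (at x within S)" if "x \<in> S" for x
  proof -
    have d: "1 - cnj t * E2 x \<noteq> 0" using that by (simp add: S_def)
    have "((\<lambda>x. F2 (mob t (E2 x))) has_derivative (\<lambda>h. F2 (mobd t (E2 x) * E2 h))) (at x within S)"
      by (rule has_derivative_compose[OF has_derivative_compose[OF
            bounded_linear_imp_has_derivative[OF blE]
            has_field_derivative_imp_has_derivative[OF mob_deriv[OF d]]]
            bounded_linear_imp_has_derivative[OF blF]])
    then show ?thesis by (simp add: g_def g'_def)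
  qed
  have inj: "inj_on g S"
  proof (rule inj_onI)
    fix x y assume "x \<in> S" "y \<in> S" "g x = g y"
    then have "mob t (E2 x) = mob t (E2 y)" by (metis E2_F2 g_def)
    then have "E2 x = E2 y" using mob_inj[of t] \<open>x \<in> S\<close> \<open>y \<in> S\<close> by (auto simp: S_def inj_on_def)
    then show "x = y" by (metis F2_E2)
  qed
  have negS: "negligible (UNIV - S)"
  proof (rule negligible_subset[of "{F2 (1 / cnj t)}"])
    show "UNIV - S \<subseteq> {F2 (1 / cnj t)}"
    proof
      fix x assume "x \<in> UNIV - S"
      then have "cnj t * E2 x = 1" by (simp add: S_def)
      then have "E2 x = 1 / cnj t" by (metis mult_zero_left nonzero_eq_divide_eq mult.commute zero_neq_one)
      then show "x \<in> {F2 (1 / cnj t)}" by (metis F2_E2 singletonI)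
    qed
  qed simp
  have neggS: "negligible (UNIV - g ` S)"
  proof (rule negligible_subset[of "{F2 (- 1 / cnj t)}"])
    show "UNIV - g ` S \<subseteq> {F2 (- 1 / cnj t)}"
    proof
      fix y assume y: "y \<in> UNIV - g ` S"
      have h0: "1 + cnj t * E2 y = 0"
      proof (rule ccontr)
        assume "1 + cnj t * E2 y \<noteq> 0"
        then obtain w where w: "1 - cnj t * w \<noteq> 0" "E2 y = mob t w" using mob_surj by blast
        then have "F2 w \<in> S" "g (F2 w) = y" by (simp_all add: S_def g_def) (metis F2_E2)
        then show False using y by blast
      qed
      have ct: "cnj t \<noteq> 0" using h0 by auto
      have "cnj t * E2 y = -1" using h0 by (simp add: eq_neg_iff_add_eq_0 add.commute)
      then have "E2 y = - 1 / cnj t" using ct by (simp add: field_simps)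
      then show "y \<in> {F2 (- 1 / cnj t)}" by (metis F2_E2 singletonI)
    qed
  qed simp
  have HS: "(H has_integral b) S"
  proof -
    have "(H has_integral b) UNIV" using H_has_integral by (simp add: H_def b_def)
    moreover have "negligible {x \<in> UNIV - S. H x \<noteq> 0}" by (rule negligible_subset[OF negS]) auto
    moreover have "negligible {x \<in> S - UNIV. H x \<noteq> 0}" by simp
    ultimately show ?thesis using has_integral_spike_set_eq[of UNIV S H b] by blast
  qed
  have Hai: "H absolutely_integrable_on S"
    using HS Hnn by (intro nonnegative_absolutely_integrable_1) auto
  have lhs: "(\<lambda>x. \<bar>det (matrix (g' x))\<bar> *\<^sub>R f (g x)) absolutely_integrable_on S \<and>
      integral S (\<lambda>x. \<bar>det (matrix (g' x))\<bar> *\<^sub>R f (g x)) = vec b"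
  proof -
    have eq: "\<bar>det (matrix (g' x))\<bar> *\<^sub>R f (g x) = vec (H x)" if "x \<in> S" for x
    proof -
      have d: "1 - cnj t * E2 x \<noteq> 0" using that by (simp add: S_def)
      have "\<bar>det (matrix (g' x))\<bar> *\<^sub>R f (g x) = vec ((cmod (mobd t (E2 x)))\<^sup>2 * G (g x))"
        by (simp add: g'_def det_mult_complex f_def vec_scaleR)
      also have "\<dots> = vec (H x)"
        using mob_pullback[OF d, of \<nu>] by (simp add: G_def H_def g_def)
      finally show ?thesis .
    qed
    have "(\<lambda>x. vec (H x) :: real^1) absolutely_integrable_on S"
      using Hai by (simp add: absolutely_integrable_on_1_iff)
    then have A: "(\<lambda>x. \<bar>det (matrix (g' x))\<bar> *\<^sub>R f (g x)) absolutely_integrable_on S"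
      by (rule absolutely_integrable_spike[OF _ negligible_empty]) (simp add: eq)
    have "integral S (\<lambda>x. \<bar>det (matrix (g' x))\<bar> *\<^sub>R f (g x)) = integral S (\<lambda>x. vec (H x) :: real^1)"
      by (rule integral_cong) (simp add: eq)
    also have "\<dots> = vec (integral S H)" by (simp add: integral_on_1_eq)
    also have "\<dots> = vec b" using HS by (simp add: integral_unique)
    finally show ?thesis using A by simp
  qed
  have rhs: "f absolutely_integrable_on (g ` S) \<and> integral (g ` S) f = vec b"
    using has_absolute_integral_change_of_variables[OF S_leb der inj] lhs by blast
  have GgS: "(G has_integral b) (g ` S)"
  proof -
    have "G absolutely_integrable_on (g ` S)"
      using rhs by (simp add: f_def absolutely_integrable_on_1_iff)
    then have "G integrable_on (g ` S)" by (simp add: absolutely_integrable_on_def)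
    moreover have "integral (g ` S) G = b"
      using rhs by (simp add: f_def integral_on_1_eq vec_eq_iff)
    ultimately show ?thesis by (metis has_integral_integral)
  qed
  have GU: "(G has_integral b) UNIV"
  proof -
    have "negligible {x \<in> UNIV - g ` S. G x \<noteq> 0}" by (rule negligible_subset[OF neggS]) auto
    moreover have "negligible {x \<in> g ` S - UNIV. G x \<noteq> 0}" by simp
    ultimately show ?thesis using GgS has_integral_spike_set_eq[of "g ` S" UNIV G b] by blast
  qed
  have "(\<integral>\<^sup>+y. ennreal (G y) \<partial>lborel) = ennreal b"
    by (rule nn_integral_has_integral_lborel[OF _ Gnn GU]) (simp add: G_def)
  moreover have "(\<integral>\<^sup>+s. ennreal (rho s * kk \<nu> t s) \<partial>lborel) = (\<integral>\<^sup>+y. ennreal (G y) \<partial>lborel)"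
    by (subst lborel_complex_E2) (simp add: nn_integral_distr G_def)
  ultimately show ?thesis by (simp add: b_def)
qed



lemma iota_rho: "iota = density lborel (\<lambda>s. ennreal (rho s))"
  by (simp add: iota_def rho_def)

lemma key_iota: "(\<integral>\<^sup>+s. ennreal (kk \<nu> t s) \<partial>iota) = ennreal (2 / (real \<nu> + 2))"
proof -
  have "(\<integral>\<^sup>+s. ennreal (kk \<nu> t s) \<partial>iota) = (\<integral>\<^sup>+s. ennreal (rho s) * ennreal (kk \<nu> t s) \<partial>lborel)"
    unfolding iota_rho by (rule nn_integral_density) auto
  also have "\<dots> = (\<integral>\<^sup>+s. ennreal (rho s * kk \<nu> t s) \<partial>lborel)"
  proof (intro nn_integral_cong)
    fix s
    show "ennreal (rho s) * ennreal (kk \<nu> t s) = ennreal (rho s * kk \<nu> t s)"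
      by (rule ennreal_mult[symmetric]) (simp_all add: rho_def kk_def)
  qed
  finally show ?thesis using key_lborel by simp
qed

lemma space_iota[simp]: "space iota = UNIV"
  by (simp add: iota_def)

lemma sets_iota[simp]: "sets iota = sets borel"
  by (simp add: iota_def)

lemma prob_space_iota: "prob_space iota"
proof
  have "(\<integral>\<^sup>+s. ennreal (kk 0 0 s) \<partial>iota) = emeasure iota (space iota)"
    by (simp add: kk_def)
  moreover have "(\<integral>\<^sup>+s. ennreal (kk 0 0 s) \<partial>iota) = 1" using key_iota[of 0 0] by simp
  ultimately show "emeasure iota (space iota) = 1" by simp
qed




definition prevc :: "(nat \<Rightarrow> complex) \<Rightarrow> nat \<Rightarrow> complex" where
  "prevc s i = (if i = 0 then 0 else s (i - 1))"

definition Dch :: "nat \<Rightarrow> nat \<Rightarrow> (nat \<Rightarrow> complex) \<Rightarrow> real" where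
  "Dch \<nu> n s = (\<Prod>i<n. kk \<nu> (prevc s i) (s i))"

lemma kk_nonneg: "kk \<nu> t s \<ge> 0" by (simp add: kk_def)

lemma kk_meas2[measurable]:
  assumes [measurable]: "f \<in> borel_measurable M" "g \<in> borel_measurable M"
  shows "(\<lambda>x. kk \<nu> (f x) (g x)) \<in> borel_measurable M"
  unfolding kk_def by measurable

interpretation iota_prod: product_sigma_finite "\<lambda>_::nat. iota"
  unfolding product_sigma_finite_def using prob_space_iota by (simp add: prob_space_imp_sigma_finite)

lemma comp_meas: "j \<in> J \<Longrightarrow> (\<lambda>x. x j) \<in> borel_measurable (PiM J (\<lambda>_. iota))"
  using measurable_component_singleton[of j J "\<lambda>_. iota"]
  by (simp add: measurable_cong_sets[OF refl sets_iota])

lemma prevc_meas: "i < n \<Longrightarrow> {..<n} \<subseteq> J \<Longrightarrow> (\<lambda>x. prevc x i) \<in> borel_measurable (PiM J (\<lambda>_. iota))"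
  by (cases i) (auto simp: prevc_def intro!: comp_meas)

lemma Dch_meas: "(\<lambda>s. ennreal (Dch \<nu> n s)) \<in> borel_measurable (PiM J (\<lambda>_. iota))"
  if "{..<n} \<subseteq> J" for J
proof -
  have [measurable]: "(\<lambda>s. Dch \<nu> n s) \<in> borel_measurable (PiM J (\<lambda>_. iota))"
    unfolding Dch_def using that
    by (intro borel_measurable_prod kk_meas2 prevc_meas comp_meas) auto
  show ?thesis by measurable
qed

lemma kk_meas_iota: "(\<lambda>y. ennreal (kk \<nu> t y)) \<in> borel_measurable iota"
proof -
  have "(\<lambda>y. ennreal (kk \<nu> t y)) \<in> borel_measurable borel" by measurable
  then show ?thesis by (simp add: measurable_cong_sets[OF sets_iota refl])
qed

lemma Dch_upd: "Dch \<nu> (Suc n) (x(n := y)) = Dch \<nu> n x * kk \<nu> (prevc x n) y"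
proof -
  have "Dch \<nu> n (x(n := y)) = Dch \<nu> n x"
    unfolding Dch_def prevc_def by (intro prod.cong) (auto split: if_splits)
  moreover have "prevc (x(n := y)) n = prevc x n" by (auto simp: prevc_def)
  ultimately show ?thesis by (simp add: Dch_def)
qed

lemma chain_integral:
  "(\<integral>\<^sup>+s. ennreal (Dch \<nu> n s) \<partial>PiM {..<n} (\<lambda>_. iota)) = ennreal ((2 / (real \<nu> + 2)) ^ n)"
proof (induction n)
  case 0
  interpret prob_space "PiM {} (\<lambda>_::nat. iota)"
    by (rule prob_space_PiM) (rule prob_space_iota)
  show ?case by (simp add: Dch_def emeasure_space_1)
next
  case (Suc n)
  define c where "c = 2 / (real \<nu> + 2)"
  have c0: "c \<ge> 0" by (simp add: c_def)
  have "(\<integral>\<^sup>+s. ennreal (Dch \<nu> (Suc n) s) \<partial>PiM {..<Suc n} (\<lambda>_. iota))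
      = (\<integral>\<^sup>+s. ennreal (Dch \<nu> (Suc n) s) \<partial>PiM (insert n {..<n}) (\<lambda>_. iota))"
    by (simp add: lessThan_Suc)
  also have "\<dots> = (\<integral>\<^sup>+x. (\<integral>\<^sup>+y. ennreal (Dch \<nu> (Suc n) (x(n := y))) \<partial>iota) \<partial>PiM {..<n} (\<lambda>_. iota))"
    by (rule iota_prod.product_nn_integral_insert) (auto intro: Dch_meas)
  also have "\<dots> = (\<integral>\<^sup>+x. ennreal (Dch \<nu> n x) * ennreal c \<partial>PiM {..<n} (\<lambda>_. iota))"
  proof (rule nn_integral_cong)
    fix x
    have "(\<integral>\<^sup>+y. ennreal (Dch \<nu> (Suc n) (x(n := y))) \<partial>iota)
        = (\<integral>\<^sup>+y. ennreal (Dch \<nu> n x) * ennreal (kk \<nu> (prevc x n) y) \<partial>iota)"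
    proof (rule nn_integral_cong)
      fix y
      show "ennreal (Dch \<nu> (Suc n) (x(n := y))) = ennreal (Dch \<nu> n x) * ennreal (kk \<nu> (prevc x n) y)"
        unfolding Dch_upd by (rule ennreal_mult) (simp_all add: Dch_def kk_nonneg prod_nonneg)
    qed
    also have "\<dots> = ennreal (Dch \<nu> n x) * ennreal c"
      by (simp add: nn_integral_cmult[OF kk_meas_iota] key_iota c_def)
    finally show "(\<integral>\<^sup>+y. ennreal (Dch \<nu> (Suc n) (x(n := y))) \<partial>iota) = ennreal (Dch \<nu> n x) * ennreal c" .
  qed
  also have "\<dots> = (\<integral>\<^sup>+x. ennreal (Dch \<nu> n x) \<partial>PiM {..<n} (\<lambda>_. iota)) * ennreal c"
    by (rule nn_integral_multc, rule Dch_meas, simp)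
  also have "\<dots> = ennreal (c ^ Suc n)"
    using Suc.IH c0 by (simp add: c_def ennreal_mult[symmetric] mult.commute)
  finally show ?case by (simp add: c_def)
qed



lemma integrand_le_Dch:
  assumes "n \<ge> 1"
  shows "integrand n \<nu> s \<le> Dch \<nu> n s"
proof -
  obtain m where n: "n = Suc m" using assms by (cases n) auto
  define a where "a = (\<lambda>i. sqrt (1 + (cmod (s i))\<^sup>2))"
  have a1: "a i \<ge> 1" for i by (simp add: a_def)
  define P where "P = (\<Prod>i<m. (1 + s i * cnj (s (Suc i))))"
  define Qr where "Qr = (\<Prod>i<Suc m. (1 + (cmod (s i))\<^sup>2))"
  define K where "K = (\<lambda>i. cmod (1 + prevc s i * cnj (s i)) / sqrt ((1 + (cmod (prevc s i))\<^sup>2) * (1 + (cmod (s i))\<^sup>2)))"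
  have Kn: "K i \<ge> 0" for i by (simp add: K_def)
  have Qr_eq: "Qr = (\<Prod>i<Suc m. a i) ^ 2"
  proof -
    have "(\<Prod>i<Suc m. a i) ^ 2 = (\<Prod>i<Suc m. a i ^ 2)" by (rule prod_power_distrib)
    also have "\<dots> = Qr" unfolding Qr_def a_def
      by (intro prod.cong refl) (rule real_sqrt_pow2, simp add: add_nonneg_nonneg)
    finally show ?thesis by simp
  qed
  have cQ: "cmod (\<Prod>i<Suc m. (of_real (1 + (cmod (s i))\<^sup>2) :: complex)) = Qr"
  proof -
    have "cmod (\<Prod>i<Suc m. (of_real (1 + (cmod (s i))\<^sup>2) :: complex)) = (\<Prod>i<Suc m. cmod (of_real (1 + (cmod (s i))\<^sup>2) :: complex))"
      by (rule prod_norm[symmetric])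
    also have "\<dots> = Qr" unfolding Qr_def
      by (intro prod.cong refl) (simp only: norm_of_real abs_of_nonneg add_nonneg_nonneg zero_le_one zero_le_power2)
    finally show ?thesis .
  qed
  have int_eq: "integrand n \<nu> s = (cmod P / Qr) ^ \<nu>"
  proof -
    have "integrand n \<nu> s = (cmod (P / (\<Prod>i<Suc m. (of_real (1 + (cmod (s i))\<^sup>2) :: complex)))) ^ \<nu>"
      unfolding integrand_def n P_def by simp
    also have "\<dots> = (cmod P / Qr) ^ \<nu>" by (simp only: norm_divide cQ)
    finally show ?thesis .
  qed
  have kkK: "kk \<nu> (prevc s i) (s i) = K i ^ \<nu>" for i by (simp add: kk_def K_def)
  have D_eq: "Dch \<nu> n s = (\<Prod>i<Suc m. K i) ^ \<nu>"
  proof -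
    have "Dch \<nu> n s = (\<Prod>i<Suc m. K i ^ \<nu>)" unfolding Dch_def n by (simp only: kkK)
    also have "\<dots> = (\<Prod>i<Suc m. K i) ^ \<nu>" by (rule prod_power_distrib[symmetric])
    finally show ?thesis .
  qed
  have num: "(\<Prod>i<Suc m. cmod (1 + prevc s i * cnj (s i))) = cmod P"
  proof -
    have "(\<Prod>i<Suc m. cmod (1 + prevc s i * cnj (s i))) = cmod (1 + prevc s 0 * cnj (s 0)) * (\<Prod>i<m. cmod (1 + prevc s (Suc i) * cnj (s (Suc i))))"
      by (rule prod.lessThan_Suc_shift)
    also have "\<dots> = (\<Prod>i<m. cmod (1 + s i * cnj (s (Suc i))))" by (simp add: prevc_def)
    also have "\<dots> = cmod P" unfolding P_def by (rule prod_norm)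
    finally show ?thesis .
  qed
  have sp: "(\<Prod>i<Suc m. sqrt (1 + (cmod (prevc s i))\<^sup>2)) = (\<Prod>i<m. a i)"
  proof -
    have "(\<Prod>i<Suc m. sqrt (1 + (cmod (prevc s i))\<^sup>2)) = sqrt (1 + (cmod (prevc s 0))\<^sup>2) * (\<Prod>i<m. sqrt (1 + (cmod (prevc s (Suc i)))\<^sup>2))"
      by (rule prod.lessThan_Suc_shift)
    also have "\<dots> = (\<Prod>i<m. a i)" by (simp add: prevc_def a_def)
    finally show ?thesis .
  qed
  define den where "den = (\<Prod>i<m. a i) * (\<Prod>i<Suc m. a i)"
  have den_eq: "(\<Prod>i<Suc m. sqrt ((1 + (cmod (prevc s i))\<^sup>2) * (1 + (cmod (s i))\<^sup>2))) = den"
  proof -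
    have "(\<Prod>i<Suc m. sqrt ((1 + (cmod (prevc s i))\<^sup>2) * (1 + (cmod (s i))\<^sup>2)))
        = (\<Prod>i<Suc m. sqrt (1 + (cmod (prevc s i))\<^sup>2)) * (\<Prod>i<Suc m. sqrt (1 + (cmod (s i))\<^sup>2))"
      by (simp only: real_sqrt_mult prod.distrib)
    also have "\<dots> = den" by (simp only: sp den_def a_def)
    finally show ?thesis .
  qed
  have K_eq: "(\<Prod>i<Suc m. K i) = cmod P / den"
    unfolding K_def prod_dividef num den_eq ..
  have pa: "(\<Prod>i<m. a i) \<ge> 1" by (rule prod_ge_1) (simp add: a1)
  have den0: "den > 0" unfolding den_def using pa by (simp add: prod_pos a_def add_pos_nonneg)
  have den_le: "den \<le> Qr"
  proof -
    have "(\<Prod>i<m. a i) \<le> (\<Prod>i<Suc m. a i)"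
      using a1[of m] pa by simp
    then show ?thesis unfolding den_def Qr_eq power2_eq_square
      using pa by (intro mult_right_mono) (auto intro: prod_nonneg simp: a_def)
  qed
  have "cmod P / Qr \<le> cmod P / den"
    using den0 den_le by (intro divide_left_mono) auto
  then have "(cmod P / Qr) ^ \<nu> \<le> (cmod P / den) ^ \<nu>"
    using den0 den_le by (intro power_mono) auto
  then show ?thesis unfolding int_eq D_eq K_eq .
qed



theorem mainTheorem7:
  fixes n \<nu> :: nat
  assumes "n \<ge> 1"
  shows "I n \<nu> \<le> 2 ^ (2 * n)"
proof -
  define c where "c = 2 / (real \<nu> + 2)"
  have c0: "c \<ge> 0" by (simp add: c_def)
  have "(\<integral>\<^sup>+s. ennreal (integrand n \<nu> s) \<partial>PiM {..<n} (\<lambda>_. iota))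
      \<le> (\<integral>\<^sup>+s. ennreal (Dch \<nu> n s) \<partial>PiM {..<n} (\<lambda>_. iota))"
    by (intro nn_integral_mono ennreal_leI integrand_le_Dch[OF assms])
  also have "\<dots> = ennreal (c ^ n)" by (simp add: chain_integral c_def)
  finally have le1: "(\<integral>\<^sup>+s. ennreal (integrand n \<nu> s) \<partial>PiM {..<n} (\<lambda>_. iota)) \<le> ennreal (c ^ n)" .
  have "I n \<nu> \<le> ennreal (real (\<nu> + 1) ^ n) * ennreal (c ^ n)"
    unfolding I_def by (intro mult_left_mono le1) simp
  also have "\<dots> = ennreal ((real (\<nu> + 1) * c) ^ n)"
    by (simp add: ennreal_mult[symmetric] power_mult_distrib c0)
  also have "\<dots> \<le> ennreal (4 ^ n)"
  proof (intro ennreal_leI power_mono)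
    show "0 \<le> real (\<nu> + 1) * c" using c0 by simp
    have "real (\<nu> + 1) * c = 2 * (real \<nu> + 1) / (real \<nu> + 2)" by (simp add: c_def)
    also have "\<dots> \<le> 2" by (simp add: field_simps)
    finally show "real (\<nu> + 1) * c \<le> 4" by simp
  qed
  also have "\<dots> = 2 ^ (2 * n)"
    by (simp add: power_mult ennreal_power[symmetric])
  finally show ?thesis .
qed


end
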